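(* Let $n\ge2$, $\alpha\in[0,\pi/2)$, $A,B\in\Pi_{s,\alpha}^n$, $q\in\mathbb{C}$ with $0<|q|\le1$, and $f\in\mathcal{F}$. Then \[ |q|^2\,w_q(A\sigma_fB)\le\sec^3(\alpha)\,\big(w_q(A)\,\sigma_f\,w_q(B)\big). \]
   Context: For $\alpha\in[0,\pi/2)$, $S_\alpha=\{z\in\mathbb{C}:\operatorname{Re}z>0,\ |\operatorname{Im}z|\le\tan(\alpha)\operatorname{Re}z\}$, and $\Pi_{s,\alpha}^n$ is the set of $n\times n$ complex matrices whose numerical range is contained in $S_\alpha$. $\mathcal{F}$ is the set of operator monotone $f:(0,\infty)\to(0,\infty)$ with $f(1)=1$, each with a probability measure $\nu_f$ on $[0,1]$ such that $f(x)=\int_0^1((1-s)+sx^{-1})^{-1}d\nu_f(s)$. For accretive $X,Y$, $X!_sY=((1-s)X^{-1}+sY^{-1})^{-1}$ and $X\sigma_fY=\int_0^1(X!_sY)\,d\nu_f(s)$; for positive scalars $a\sigma_fb=af(b/a)$. $w_q(X)=\sup\{|\langle Xx,y\rangle|:\|x\|=\|y\|=1,\ \langle x,y\rangle=q\}$. *)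

theory Defs
  imports "HOL-Analysis.Analysis" "HOL-Probability.Probability"
begin

type_synonym 'n cmat = "complex^'n^'n"

definition cinner :: "complex^'n::finite \<Rightarrow> complex^'n \<Rightarrow> complex" where
  "cinner x y = (\<Sum>i\<in>UNIV. x$i * cnj (y$i))"

definition numrange :: "complex^'n::finite^'n \<Rightarrow> complex set" where
  "numrange X = {cinner (X *v x) x | x. norm x = 1}"

definition sector :: "real \<Rightarrow> complex set" where
  "sector \<alpha> = {z. Re z > 0 \<and> \<bar>Im z\<bar> \<le> tan \<alpha> * Re z}"

definition sectorial :: "real \<Rightarrow> (complex^'n::finite^'n) set" where
  "sectorial \<alpha> = {X. numrange X \<subseteq> sector \<alpha>}"

definition qnumrad :: "complex \<Rightarrow> complex^'n::finite^'n \<Rightarrow> real" where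
  "qnumrad q X = Sup {cmod (cinner (X *v x) y) | x y.
      norm x = 1 \<and> norm y = 1 \<and> cinner x y = q}"

definition wharm :: "real \<Rightarrow> complex^'n::finite^'n \<Rightarrow> complex^'n^'n \<Rightarrow> complex^'n^'n" where
  "wharm s X Y = matrix_inv ((1 - s) *\<^sub>R matrix_inv X + s *\<^sub>R matrix_inv Y)"

text \<open>The representing function f of a probability measure nu on [0,1]:
  f(x) = integral of ((1-s) + s x^{-1})^{-1} d nu(s).\<close>
definition omfun :: "real measure \<Rightarrow> real \<Rightarrow> real" where
  "omfun \<nu> x = (\<integral>s. inverse ((1 - s) + s * inverse x) \<partial>\<nu>)"

definition opmean :: "real measure \<Rightarrow> complex^'n::finite^'n \<Rightarrow> complex^'n^'n \<Rightarrow> complex^'n^'n" where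
  "opmean \<nu> X Y = (\<integral>s. wharm s X Y \<partial>\<nu>)"

definition scmean :: "real measure \<Rightarrow> real \<Rightarrow> real \<Rightarrow> real" where
  "scmean \<nu> a b = a * omfun \<nu> (b / a)"

text \<open>nu is a probability measure on [0,1] (as a Borel measure on R concentrated on [0,1]).\<close>
definition prob_on_unit :: "real measure \<Rightarrow> bool" where
  "prob_on_unit \<nu> \<longleftrightarrow> prob_space \<nu> \<and> sets \<nu> = sets borel \<and> emeasure \<nu> {0..1} = 1"

end

theory Submission
  imports Defs
begin


lemma cscaleR: "(r::real) *\<^sub>R (z::complex) = of_real r * z"
  by (simp add: scaleR_conv_of_real)
lemma scaleR_comp_c: "((r::real) *\<^sub>R (x::complex^'n::finite)) $ i = of_real r * x $ i"
  by (simp add: cscaleR)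
lemma scaleR_mat_comp_c: "((r::real) *\<^sub>R (x::complex^'n::finite^'m)) $ i $ j = of_real r * x $ i $ j"
  by (simp add: cscaleR)

lemma cinner_add_left: "cinner (x + y) z = cinner x z + cinner y z"
  by (simp add: cinner_def sum.distrib distrib_right)
lemma cinner_add_right: "cinner x (y + z) = cinner x y + cinner x z"
  by (simp add: cinner_def sum.distrib distrib_left)
lemma cinner_smult_left: "cinner (c *s x) y = c * cinner x y"
  by (simp add: cinner_def sum_distrib_left mult.assoc)
lemma cinner_smult_right: "cinner x (c *s y) = cnj c * cinner x y"
  by (simp add: cinner_def sum_distrib_left mult_ac)
lemma cinner_scaleR_left: "cinner (r *\<^sub>R x) y = of_real r * cinner x y"
  by (simp add: cinner_def sum_distrib_left mult.assoc scaleR_comp_c cscaleR)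
lemma cinner_scaleR_right: "cinner x (r *\<^sub>R y) = of_real r * cinner x y"
  by (simp add: cinner_def sum_distrib_left mult_ac scaleR_comp_c cscaleR)
lemma cinner_cnj: "cnj (cinner x y) = cinner y x"
  by (simp add: cinner_def mult.commute)
lemma cinner_zero_left[simp]: "cinner 0 y = 0" by (simp add: cinner_def)
lemma cinner_zero_right[simp]: "cinner x 0 = 0" by (simp add: cinner_def)
lemma Re_cinner: "Re (cinner x y) = inner x y"
  by (simp add: cinner_def inner_vec_def inner_complex_def Re_sum)
lemma cinner_self_real: "cinner x x = of_real ((norm x)\<^sup>2)"
proof -
  have "cinner x x = (\<Sum>i\<in>UNIV. of_real ((cmod (x$i))\<^sup>2))"
    unfolding cinner_def by (simp add: complex_mult_cnj cmod_power2 del: of_real_power)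
  also have "\<dots> = of_real ((norm x)\<^sup>2)"
    by (simp add: norm_vec_def L2_set_def sum_nonneg del: of_real_power flip: of_real_sum)
  finally show ?thesis .
qed
lemma Re_cinner_self: "Re (cinner x x) = (norm x)\<^sup>2"
  by (simp add: cinner_self_real)

lemma mv_add: "(A::complex^'n::finite^'m) *v (x + y) = A *v x + A *v y"
  by (simp add: matrix_vector_right_distrib)
lemma mv_smult: "(A::complex^'n::finite^'m) *v (c *s x) = c *s (A *v x)"
  by (simp add: vec_eq_iff matrix_vector_mult_def vector_scalar_mult_def sum_distrib_left mult_ac)
lemma mv_scaleR: "(A::complex^'n::finite^'m) *v (r *\<^sub>R x) = r *\<^sub>R (A *v x)"
  by (simp add: vec_eq_iff matrix_vector_mult_def sum_distrib_left mult_ac scaleR_comp_c cscaleR)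
lemma mv_zero: "(A::complex^'n::finite^'m) *v 0 = 0"
  by (simp add: vec_eq_iff matrix_vector_mult_def)
lemma mat_add_mv: "((P::complex^'n::finite^'m) + Q) *v x = P *v x + Q *v x"
  by (simp add: matrix_vector_mult_add_rdistrib)
lemma mat_scaleR_mv: "(r *\<^sub>R (P::complex^'n::finite^'m)) *v x = r *\<^sub>R (P *v x)"
  by (simp add: vec_eq_iff matrix_vector_mult_def sum_distrib_left mult_ac scaleR_mat_comp_c cscaleR)
lemma norm_smult_c: "norm (c *s (x::complex^'n::finite)) = cmod c * norm x"
proof -
  have "norm (c *s x) = L2_set (\<lambda>i. cmod c * cmod (x$i)) UNIV"
    by (simp add: norm_vec_def vector_scalar_mult_def norm_mult)
  also have "\<dots> = cmod c * norm x"
    by (simp add: norm_vec_def L2_set_right_distrib)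
  finally show ?thesis .
qed



lemma quad_real:
  fixes a b c :: real
  assumes h: "\<And>\<tau>. 0 \<le> a - \<tau> * c + \<tau>\<^sup>2 * c * b" and a: "0 \<le> a" and b: "0 \<le> b" and c: "0 \<le> c"
  shows "c \<le> 4 * a * b"
proof (cases "b = 0")
  case True
  show ?thesis
  proof (rule ccontr)
    assume "\<not> ?thesis"
    then have "c > 0" using True by simp
    have "0 \<le> a - ((a+1)/c) * c" using h[of "(a+1)/c"] True by simp
    then show False using \<open>c > 0\<close> by simp
  qed
next
  case False
  then have bp: "b > 0" using b by simp
  have "0 \<le> a - (1/(2*b)) * c + (1/(2*b))\<^sup>2 * c * b" by (rule h)
  also have "\<dots> = a - c / (4*b)" using bp by (simp add: field_simps power2_eq_square)
  finally have "c / (4*b) \<le> a" by simp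
  then show ?thesis using bp by (simp add: field_simps mult.commute)
qed

lemma cinner_expand:
  fixes M :: "complex^'n::finite^'n"
  shows "cinner (M *v (x + l *s y)) (x + l *s y) =
    cinner (M *v x) x + cnj l * cinner (M *v x) y + l * cinner (M *v y) x + l * cnj l * cinner (M *v y) y"
  by (simp add: mv_add mv_smult cinner_add_left cinner_add_right cinner_smult_left cinner_smult_right algebra_simps)

lemma accretive_CS:
  fixes M :: "complex^'n::finite^'n" and \<omega> :: complex
  assumes acc: "\<And>z. 0 \<le> Re (\<omega> * cinner (M *v z) z)"
  shows "(cmod (\<omega> * cinner (M *v x) y + cnj (\<omega> * cinner (M *v y) x)))\<^sup>2
          \<le> 4 * Re (\<omega> * cinner (M *v x) x) * Re (\<omega> * cinner (M *v y) y)"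
proof -
  define H where "H = \<omega> * cinner (M *v x) y + cnj (\<omega> * cinner (M *v y) x)"
  define a where "a = Re (\<omega> * cinner (M *v x) x)"
  define b where "b = Re (\<omega> * cinner (M *v y) y)"
  have "0 \<le> a - \<tau> * (cmod H)\<^sup>2 + \<tau>\<^sup>2 * (cmod H)\<^sup>2 * b" for \<tau> :: real
  proof -
    define l where "l = - (of_real \<tau> * H)"
    have e1: "Re (\<omega> * (cnj l * cinner (M *v x) y) + \<omega> * (l * cinner (M *v y) x)) = Re (cnj l * H)"
      unfolding H_def by (simp add: algebra_simps)
    have e2: "Re (cnj l * H) = - \<tau> * (cmod H)\<^sup>2"
      unfolding l_def cmod_power2 by (simp add: algebra_simps power2_eq_square)
    have e3: "l * cnj l = of_real (\<tau>\<^sup>2 * (cmod H)\<^sup>2)"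
    proof -
      have "l * cnj l = (of_real \<tau>)\<^sup>2 * (H * cnj H)" by (simp add: l_def algebra_simps power2_eq_square)
      also have "\<dots> = of_real (\<tau>\<^sup>2 * (cmod H)\<^sup>2)" by (simp add: complex_norm_square[symmetric])
      finally show ?thesis .
    qed
    have "0 \<le> Re (\<omega> * cinner (M *v (x + l *s y)) (x + l *s y))" by (rule acc)
    also have "\<dots> = a - \<tau> * (cmod H)\<^sup>2 + \<tau>\<^sup>2 * (cmod H)\<^sup>2 * b"
      unfolding cinner_expand distrib_left a_def b_def using e1 e2 e3
      by (simp add: mult.assoc[symmetric] mult.commute[of \<omega>]) (simp add: algebra_simps)
    finally show ?thesis .
  qed
  moreover have "0 \<le> a" "0 \<le> b" unfolding a_def b_def by (rule acc)+
  ultimately have "(cmod H)\<^sup>2 \<le> 4 * a * b"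
    by (intro quad_real) auto
  then show ?thesis unfolding H_def a_def b_def .
qed

lemma cinner_CS: "cmod (cinner x y) \<le> norm x * norm (y::complex^'n::finite)"
proof -
  have "(cmod (1 * cinner (mat 1 *v x) y + cnj (1 * cinner (mat 1 *v y) x)))\<^sup>2
          \<le> 4 * Re (1 * cinner (mat 1 *v x) x) * Re (1 * cinner (mat 1 *v y) y)"
    by (rule accretive_CS) (simp add: Re_cinner_self)
  then have "(cmod (2 * cinner x y))\<^sup>2 \<le> 4 * (norm x)\<^sup>2 * (norm y)\<^sup>2"
    by (simp add: cinner_cnj Re_cinner_self)
  then have "(cmod (cinner x y))\<^sup>2 \<le> (norm x * norm y)\<^sup>2"
    by (simp add: norm_mult power_mult_distrib)
  then show ?thesis by (rule power2_le_imp_le) simp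
qed



lemma two_CS_real:
  fixes h1 h2 a1 a2 b1 b2 :: real
  assumes "0 \<le> h1" "0 \<le> h2" "0 \<le> a1" "0 \<le> a2" "0 \<le> b1" "0 \<le> b2"
    and "h1\<^sup>2 \<le> 4 * a1 * b1" and "h2\<^sup>2 \<le> 4 * a2 * b2"
  shows "(h1 + h2)\<^sup>2 \<le> 4 * (a1 + a2) * (b1 + b2)"
proof -
  have "(h1 * h2)\<^sup>2 \<le> (4 * a1 * b1) * (4 * a2 * b2)"
    unfolding power_mult_distrib using assms by (intro mult_mono) auto
  also have "\<dots> \<le> (2 * (a1 * b2 + a2 * b1))\<^sup>2"
  proof -
    have "0 \<le> (a1 * b2 - a2 * b1)\<^sup>2" by simp
    then show ?thesis by (simp add: power2_eq_square algebra_simps)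
  qed
  finally have "h1 * h2 \<le> 2 * (a1 * b2 + a2 * b1)"
    by (rule power2_le_imp_le) (use assms in simp)
  then show ?thesis using assms by (simp add: power2_eq_square algebra_simps)
qed

lemma sector_CS_p:
  fixes A :: "complex^'n::finite^'n"
  assumes sec: "\<And>z. 0 \<le> Re (cinner (A *v z) z) \<and> \<bar>Im (cinner (A *v z) z)\<bar> \<le> t * Re (cinner (A *v z) z)"
    and tp: "t \<le> p" and p: "0 < p"
  shows "(cmod (cinner (A *v x) y))\<^sup>2 \<le> (1 + p\<^sup>2) * Re (cinner (A *v x) x) * Re (cinner (A *v y) y)"
proof -
  define \<omega> where "\<omega> = Complex p 1"
  define \<omega>' where "\<omega>' = Complex p (-1)"
  define u where "u = cinner (A *v x) y"
  define v where "v = cinner (A *v y) x"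
  have ptre: "t * Re (cinner (A *v z) z) \<le> p * Re (cinner (A *v z) z)" for z
    using sec[of z] tp by (intro mult_right_mono) auto
  have acc1: "0 \<le> Re (\<omega> * cinner (A *v z) z)" for z
    using sec[of z] ptre[of z] abs_ge_self[of "Im (cinner (A *v z) z)"] unfolding \<omega>_def by simp
  have acc2: "0 \<le> Re (\<omega>' * cinner (A *v z) z)" for z
    using sec[of z] ptre[of z] abs_ge_minus_self[of "Im (cinner (A *v z) z)"] unfolding \<omega>'_def by simp
  define H1 where "H1 = \<omega> * u + cnj (\<omega> * v)"
  define H2 where "H2 = \<omega>' * u + cnj (\<omega>' * v)"
  define a1 where "a1 = Re (\<omega> * cinner (A *v x) x)"
  define b1 where "b1 = Re (\<omega> * cinner (A *v y) y)"
  define a2 where "a2 = Re (\<omega>' * cinner (A *v x) x)"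
  define b2 where "b2 = Re (\<omega>' * cinner (A *v y) y)"
  have c1: "(cmod H1)\<^sup>2 \<le> 4 * a1 * b1"
    unfolding H1_def a1_def b1_def u_def v_def by (rule accretive_CS) (rule acc1)
  have c2: "(cmod H2)\<^sup>2 \<le> 4 * a2 * b2"
    unfolding H2_def a2_def b2_def u_def v_def by (rule accretive_CS) (rule acc2)
  have pos: "0 \<le> a1" "0 \<le> a2" "0 \<le> b1" "0 \<le> b2"
    unfolding a1_def a2_def b1_def b2_def using acc1 acc2 by auto
  have sa: "a1 + a2 = 2 * p * Re (cinner (A *v x) x)" unfolding a1_def a2_def \<omega>_def \<omega>'_def by simp
  have sb: "b1 + b2 = 2 * p * Re (cinner (A *v y) y)" unfolding b1_def b2_def \<omega>_def \<omega>'_def by simp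
  have ident: "\<omega> * H1 - \<omega>' * H2 = Complex 0 (4 * p) * u"
    unfolding H1_def H2_def \<omega>_def \<omega>'_def by (simp add: complex_eq_iff algebra_simps)
  have nw: "cmod \<omega> = sqrt (1 + p\<^sup>2)" "cmod \<omega>' = sqrt (1 + p\<^sup>2)"
    unfolding \<omega>_def \<omega>'_def by (simp_all add: cmod_def add.commute)
  have "4 * p * cmod u = cmod (\<omega> * H1 - \<omega>' * H2)"
  proof -
    have "cmod (Complex 0 (4 * p)) = sqrt ((4 * p)\<^sup>2)" by (simp add: cmod_def)
    also have "\<dots> = 4 * p" by (subst real_sqrt_abs) (use p in simp)
    finally have "cmod (Complex 0 (4 * p)) = 4 * p" .
    then show ?thesis unfolding ident norm_mult by simp
  qed
  also have "\<dots> \<le> cmod (\<omega> * H1) + cmod (\<omega>' * H2)" by (rule norm_triangle_ineq4)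
  also have "\<dots> = sqrt (1 + p\<^sup>2) * (cmod H1 + cmod H2)" by (simp add: norm_mult nw algebra_simps)
  finally have "(4 * p * cmod u)\<^sup>2 \<le> (sqrt (1 + p\<^sup>2) * (cmod H1 + cmod H2))\<^sup>2"
    using p by (intro power_mono) auto
  also have "\<dots> = (1 + p\<^sup>2) * (cmod H1 + cmod H2)\<^sup>2"
    by (simp add: power_mult_distrib)
  also have "\<dots> \<le> (1 + p\<^sup>2) * (4 * (a1 + a2) * (b1 + b2))"
    by (intro mult_left_mono two_CS_real c1 c2 pos) auto
  also have "\<dots> = 16 * p\<^sup>2 * ((1 + p\<^sup>2) * Re (cinner (A *v x) x) * Re (cinner (A *v y) y))"
    unfolding sa sb by (simp add: power2_eq_square algebra_simps)
  finally have "16 * p\<^sup>2 * (cmod u)\<^sup>2 \<le> 16 * p\<^sup>2 * ((1 + p\<^sup>2) * Re (cinner (A *v x) x) * Re (cinner (A *v y) y))"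
    by (simp add: power_mult_distrib)
  then show ?thesis unfolding u_def using p by simp
qed

lemma le_limit_aux:
  fixes X Y t :: real
  assumes h: "\<And>p. t < p \<Longrightarrow> X \<le> (1 + p\<^sup>2) * Y" and t: "0 \<le> t" and Y: "0 \<le> Y"
  shows "X \<le> (1 + t\<^sup>2) * Y"
proof (rule ccontr)
  assume "\<not> ?thesis"
  then have gt: "X > (1 + t\<^sup>2) * Y" by simp
  then have Yp: "Y > 0" using h[of "t+1"] Y by (cases "Y = 0") auto
  define e where "e = X / Y - (1 + t\<^sup>2)"
  have ep: "e > 0" using gt Yp unfolding e_def by (simp add: field_simps)
  define d where "d = min 1 (e / (4 * t + 4))"
  have dp: "d > 0" using ep t unfolding d_def by simp
  have d1: "d \<le> 1" unfolding d_def by simp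
  have "d * (4 * t + 4) \<le> e" unfolding d_def using ep t
    by (smt (verit, ccfv_SIG) min.cobounded2 nonzero_mult_div_cancel_right pos_le_divide_eq)
  then have de: "d * (2 * t + 2) < e" using ep dp t by (simp add: algebra_simps)
  have "(t + d)\<^sup>2 = t\<^sup>2 + d * (2 * t + d)" by (simp add: power2_eq_square algebra_simps)
  also have "\<dots> \<le> t\<^sup>2 + d * (2 * t + 2)" using dp d1 by (intro add_left_mono mult_left_mono) auto
  finally have "1 + (t + d)\<^sup>2 < X / Y" using de unfolding e_def by simp
  then have "(1 + (t + d)\<^sup>2) * Y < X" using Yp by (simp add: field_simps)
  moreover have "X \<le> (1 + (t + d)\<^sup>2) * Y" by (rule h) (use dp in simp)
  ultimately show False by simp
qed



lemma quad_scaleR: "cinner ((A::complex^'n::finite^'n) *v (r *\<^sub>R z)) (r *\<^sub>R z) = of_real (r * r) * cinner (A *v z) z"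
  by (simp add: mv_scaleR cinner_scaleR_left cinner_scaleR_right)

lemma cinner_axis_right: "cinner x (axis i (1::complex)) = x $ i"
  by (simp add: cinner_def axis_def if_distrib sum.delta cong: if_cong)

lemma norm_axis_c: "norm (axis i (1::complex) :: complex^'n::finite) = 1"
proof -
  have h: "cinner (axis i (1::complex)) (axis i 1 :: complex^'n) = 1"
    by (simp only: cinner_axis_right) (simp add: axis_def)
  have "(norm (axis i (1::complex) :: complex^'n))\<^sup>2 = 1"
    using Re_cinner_self[of "axis i (1::complex) :: complex^'n"] unfolding h by simp
  then show ?thesis by (simp add: power2_eq_1_iff)
qed

lemma cinner_diff_right: "cinner x (y - z) = cinner x y - cinner x z"
  by (simp add: cinner_def sum_subtractf algebra_simps)

lemma sector_all:
  fixes A :: "complex^'n::finite^'n"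
  assumes "A \<in> sectorial \<alpha>"
  shows "0 \<le> Re (cinner (A *v z) z) \<and> \<bar>Im (cinner (A *v z) z)\<bar> \<le> tan \<alpha> * Re (cinner (A *v z) z)
         \<and> (z \<noteq> 0 \<longrightarrow> 0 < Re (cinner (A *v z) z))"
proof (cases "z = 0")
  case True
  then show ?thesis by (simp add: mv_zero)
next
  case False
  define r where "r = 1 / norm z"
  have rp: "r > 0" using False unfolding r_def by simp
  have nz: "norm (r *\<^sub>R z) = 1" using False unfolding r_def by simp
  then have "cinner (A *v (r *\<^sub>R z)) (r *\<^sub>R z) \<in> sector \<alpha>"
    using assms unfolding sectorial_def numrange_def by blast
  then have s: "0 < Re (cinner (A *v (r *\<^sub>R z)) (r *\<^sub>R z))"
     "\<bar>Im (cinner (A *v (r *\<^sub>R z)) (r *\<^sub>R z))\<bar> \<le> tan \<alpha> * Re (cinner (A *v (r *\<^sub>R z)) (r *\<^sub>R z))"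
    unfolding sector_def by auto
  have rr: "r * r > 0" using rp by simp
  from s have "0 < r * r * Re (cinner (A *v z) z)" "r * r * \<bar>Im (cinner (A *v z) z)\<bar> \<le> r * r * (tan \<alpha> * Re (cinner (A *v z) z))"
    unfolding quad_scaleR using rp by (simp_all add: abs_mult algebra_simps)
  then have "0 < Re (cinner (A *v z) z)" "\<bar>Im (cinner (A *v z) z)\<bar> \<le> tan \<alpha> * Re (cinner (A *v z) z)"
    using rr mult_le_cancel_left_pos[OF rr] by (simp_all add: zero_less_mult_iff)
  then show ?thesis by simp
qed

lemma mv_bounded: "\<exists>K>0. \<forall>x. norm ((X::complex^'n::finite^'n) *v x) \<le> norm x * K"
proof -
  have "linear (\<lambda>x. X *v x)" by (rule linearI) (simp_all add: mv_add mv_scaleR)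
  then have "bounded_linear (\<lambda>x. X *v x)" by (simp add: linear_conv_bounded_linear)
  then show ?thesis by (rule bounded_linear.pos_bounded)
qed

lemma qset_bdd: "bdd_above {cmod (cinner ((X::complex^'n::finite^'n) *v x) y) | x y. norm x = 1 \<and> norm y = 1 \<and> cinner x y = q}"
proof -
  obtain K where K: "\<forall>x. norm (X *v x) \<le> norm x * K" using mv_bounded by blast
  show ?thesis
  proof (rule bdd_aboveI, clarify)
    fix x y :: "complex^'n"
    assume "norm x = 1" "norm y = 1"
    then show "cmod (cinner (X *v x) y) \<le> K"
      using cinner_CS[of "X *v x" y] K[rule_format, of x] by simp
  qed
qed

lemma qnumrad_ge:
  assumes "norm x = 1" "norm y = 1" "cinner x y = q"
  shows "cmod (cinner ((X::complex^'n::finite^'n) *v x) y) \<le> qnumrad q X"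
  unfolding qnumrad_def by (rule cSup_upper[OF _ qset_bdd]) (use assms in blast)

lemma qnumrad_le:
  assumes "\<exists>x y::complex^'n::finite. norm x = 1 \<and> norm y = 1 \<and> cinner x y = q"
    and "\<And>x y. norm x = 1 \<Longrightarrow> norm y = 1 \<Longrightarrow> cinner x y = q \<Longrightarrow> cmod (cinner ((X::complex^'n::finite^'n) *v x) y) \<le> R"
  shows "qnumrad q X \<le> R"
proof -
  obtain x0 y0 :: "complex^'n" where "norm x0 = 1" "norm y0 = 1" "cinner x0 y0 = q" using assms(1) by blast
  then show ?thesis unfolding qnumrad_def by (intro cSup_least) (use assms(2) in blast)+
qed

lemma orth_exists:
  assumes card: "CARD('n::finite) \<ge> 2" and x: "(x::complex^'n) \<noteq> 0"
  shows "\<exists>z. norm z = 1 \<and> cinner x z = 0"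
proof -
  obtain i where i: "x $ i \<noteq> 0" using x by (auto simp: vec_eq_iff)
  obtain j :: 'n where j: "j \<noteq> i"
  proof -
    have "\<not> (UNIV::'n set) \<subseteq> {i}"
    proof
      assume "(UNIV::'n set) \<subseteq> {i}"
      then have "card (UNIV::'n set) \<le> card {i}" by (intro card_mono) auto
      then show False using card by simp
    qed
    then show ?thesis using that by blast
  qed
  define z' where "z' = cnj (x $ j) *s axis i (1::complex) - cnj (x $ i) *s axis j 1"
  have "z' $ j = - cnj (x $ i)" unfolding z'_def using j by (simp add: axis_def)
  then have z'0: "z' \<noteq> 0" using i by auto
  have o: "cinner x z' = 0"
    unfolding z'_def by (simp add: cinner_diff_right cinner_smult_right cinner_axis_right)
  define z where "z = (1 / norm z') *\<^sub>R z'"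
  have "norm z = 1" using z'0 unfolding z_def by simp
  moreover have "cinner x z = 0" unfolding z_def cinner_scaleR_right o by simp
  ultimately show ?thesis by blast
qed

lemma qnum_lower:
  fixes A :: "complex^'n::finite^'n"
  assumes card: "CARD('n) \<ge> 2" and q1: "cmod q \<le> 1" and x: "norm x = 1"
  shows "cmod q * cmod (cinner (A *v x) x) \<le> qnumrad q A"
    and "\<exists>y. norm y = 1 \<and> cinner x y = q"
proof -
  have "x \<noteq> 0" using x by auto
  then obtain z where z: "norm z = 1" "cinner x z = 0" using orth_exists[OF card] by blast
  have zx: "cinner z x = 0" using z(2) cinner_cnj[of x z] by simp
  define r where "r = sqrt (1 - (cmod q)\<^sup>2)"
  have "(cmod q)\<^sup>2 \<le> 1" using q1 by (simp add: power_le_one)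
  then have r2: "r\<^sup>2 = 1 - (cmod q)\<^sup>2" unfolding r_def by simp
  define Y where "Y = (\<lambda>\<sigma>::real. cnj q *s x + complex_of_real \<sigma> *s z)"
  have xx: "cinner x x = 1" "cinner z z = 1" using x z by (simp_all add: cinner_self_real)
  have Yn: "norm (Y \<sigma>) = 1" if "\<sigma>\<^sup>2 = r\<^sup>2" for \<sigma>
  proof -
    have "cinner (Y \<sigma>) (Y \<sigma>) = q * cnj q + of_real (\<sigma>\<^sup>2)"
      unfolding Y_def by (simp add: cinner_add_left cinner_add_right cinner_smult_left cinner_smult_right
         xx z(2) zx power2_eq_square)
    also have "\<dots> = 1" using that r2 by (simp add: complex_mult_cnj cmod_power2 complex_eq_iff)
    finally have "(norm (Y \<sigma>))\<^sup>2 = 1" by (simp add: cinner_self_real complex_eq_iff)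
    then show ?thesis using norm_ge_zero[of "Y \<sigma>"] by (smt (verit) power2_eq_1_iff)
  qed
  have Yq: "cinner x (Y \<sigma>) = q" for \<sigma>
    unfolding Y_def by (simp add: cinner_add_right cinner_smult_right xx z(2))
  have YA: "cinner (A *v x) (Y \<sigma>) = q * cinner (A *v x) x + of_real \<sigma> * cinner (A *v x) z" for \<sigma>
    unfolding Y_def by (simp add: cinner_add_right cinner_smult_right)
  show "\<exists>y. norm y = 1 \<and> cinner x y = q" using Yn[of r] Yq[of r] by blast
  define a where "a = q * cinner (A *v x) x"
  define b where "b = of_real r * cinner (A *v x) z"
  have e1: "cmod (a + b) \<le> qnumrad q A"
    using qnumrad_ge[OF x Yn Yq, of r A] YA[of r] unfolding a_def b_def by simp
  have e2: "cmod (a - b) \<le> qnumrad q A"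
    using qnumrad_ge[OF x Yn Yq, of "-r" A] YA[of "-r"] unfolding a_def b_def by simp
  have "2 * cmod a = cmod ((a + b) + (a - b))" by (simp add: norm_mult)
  also have "\<dots> \<le> cmod (a + b) + cmod (a - b)" by (rule norm_triangle_ineq)
  finally have "cmod a \<le> qnumrad q A" using e1 e2 by simp
  then show "cmod q * cmod (cinner (A *v x) x) \<le> qnumrad q A" unfolding a_def by (simp add: norm_mult)
qed



lemma invertible_inv: "invertible (M::complex^'n::finite^'n) \<Longrightarrow> M ** matrix_inv M = mat 1 \<and> matrix_inv M ** M = mat 1"
  unfolding matrix_inv_def invertible_def by (rule someI_ex)

lemma invertible_from_ker: "(\<And>v. (M::complex^'n::finite^'n) *v v = 0 \<Longrightarrow> v = 0) \<Longrightarrow> invertible M"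
  using matrix_left_invertible_ker[of M] invertible_left_inverse[of M] by blast

lemma sect_data:
  fixes A :: "complex^'n::finite^'n"
  assumes card: "CARD('n) \<ge> 2" and al: "0 \<le> \<alpha>" "\<alpha> < pi / 2"
    and As: "A \<in> sectorial \<alpha>" and q: "0 < cmod q" "cmod q \<le> 1"
  shows "0 < qnumrad q A"
    and "A ** matrix_inv A = mat 1"
    and "\<And>v. (norm v)\<^sup>2 \<le> ((1 + (tan \<alpha>)\<^sup>2) * (qnumrad q A / cmod q)) * Re (cinner (matrix_inv A *v v) v)"
proof -
  define a where "a = qnumrad q A"
  define t where "t = tan \<alpha>"
  have t0: "0 \<le> t" unfolding t_def using al
    by (cases "\<alpha> = 0") (auto intro: less_imp_le[OF tan_gt_zero])
  have sec: "\<And>z. 0 \<le> Re (cinner (A *v z) z) \<and> \<bar>Im (cinner (A *v z) z)\<bar> \<le> t * Re (cinner (A *v z) z)"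
    using sector_all[OF As] unfolding t_def by blast
  have secp: "\<And>z. z \<noteq> 0 \<Longrightarrow> 0 < Re (cinner (A *v z) z)"
    using sector_all[OF As] by blast
  define x0 :: "complex^'n" where "x0 = axis undefined 1"
  have x0: "norm x0 = 1" unfolding x0_def by (rule norm_axis_c)
  have "x0 \<noteq> 0" using x0 by (metis norm_zero zero_neq_one)
  then have "0 < Re (cinner (A *v x0) x0)" using secp[of x0] by blast
  then have "0 < cmod (cinner (A *v x0) x0)" by (metis abs_Re_le_cmod abs_of_pos order_less_le_trans)
  then have "0 < cmod q * cmod (cinner (A *v x0) x0)" using q by simp
  also have "\<dots> \<le> a" unfolding a_def by (rule qnum_lower(1)[OF card q(2) x0])
  finally have apos: "0 < a" .
  then show "0 < qnumrad q A" unfolding a_def .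
  have reb: "Re (cinner (A *v y) y) \<le> (a / cmod q) * (norm y)\<^sup>2" for y
  proof (cases "y = 0")
    case True then show ?thesis by (simp add: mv_zero)
  next
    case False
    define r where "r = 1 / norm y"
    have ny: "norm (r *\<^sub>R y) = 1" using False unfolding r_def by simp
    have "cmod q * Re (cinner (A *v (r *\<^sub>R y)) (r *\<^sub>R y)) \<le> cmod q * cmod (cinner (A *v (r *\<^sub>R y)) (r *\<^sub>R y))"
      using q by (intro mult_left_mono) (auto intro: complex_Re_le_cmod)
    also have "\<dots> \<le> a" unfolding a_def by (rule qnum_lower(1)[OF card q(2) ny])
    finally have "cmod q * (r * r * Re (cinner (A *v y) y)) \<le> a" unfolding quad_scaleR by simp
    then have "r * r * Re (cinner (A *v y) y) \<le> a / cmod q" using q by (simp add: field_simps)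
    then show ?thesis using False unfolding r_def by (simp add: field_simps power2_eq_square)
  qed
  have F5: "(norm (A *v w))\<^sup>2 \<le> ((1 + t\<^sup>2) * (a / cmod q)) * Re (cinner (A *v w) w)" for w
  proof -
    define y where "y = A *v w"
    have eq: "cmod (cinner (A *v w) y) = (norm y)\<^sup>2"
      unfolding y_def cinner_self_real by (simp only: norm_of_real) simp
    have "((norm y)\<^sup>2)\<^sup>2 = (cmod (cinner (A *v w) y))\<^sup>2" using eq by simp
    also have "\<dots> \<le> (1 + t\<^sup>2) * (Re (cinner (A *v w) w) * Re (cinner (A *v y) y))"
      by (rule le_limit_aux[OF _ t0]) (use sector_CS_p[OF sec] t0 sec in \<open>auto simp: mult.assoc\<close>)
    also have "\<dots> \<le> (1 + t\<^sup>2) * (Re (cinner (A *v w) w) * ((a / cmod q) * (norm y)\<^sup>2))"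
      using sec[of w] reb[of y] by (intro mult_left_mono) auto
    also have "\<dots> = ((1 + t\<^sup>2) * (a / cmod q) * Re (cinner (A *v w) w)) * (norm y)\<^sup>2"
      by (simp only: mult_ac)
    finally have ineq: "((norm y)\<^sup>2)\<^sup>2 \<le> ((1 + t\<^sup>2) * (a / cmod q) * Re (cinner (A *v w) w)) * (norm y)\<^sup>2" .
    show ?thesis
    proof (cases "norm y = 0")
      case True then show ?thesis using sec[of w] apos q t0 unfolding y_def by simp
    next
      case False
      then have "(norm y)\<^sup>2 > 0" by simp
      moreover have "(norm y)\<^sup>2 * (norm y)\<^sup>2 \<le> ((1 + t\<^sup>2) * (a / cmod q) * Re (cinner (A *v w) w)) * (norm y)\<^sup>2"
        using ineq by (simp only: power2_eq_square[of "(norm y)\<^sup>2"])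
      ultimately have "(norm y)\<^sup>2 \<le> (1 + t\<^sup>2) * (a / cmod q) * Re (cinner (A *v w) w)"
        using mult_right_le_imp_le by blast
      then show ?thesis unfolding y_def by (simp only: mult_ac)
    qed
  qed
  have inv: "invertible A"
  proof (rule invertible_from_ker)
    fix v assume "A *v v = 0"
    then show "v = 0" using secp[of v] by (cases "v = 0") auto
  qed
  show AA: "A ** matrix_inv A = mat 1" using invertible_inv[OF inv] by blast
  fix v :: "complex^'n"
  define w where "w = matrix_inv A *v v"
  have Aw: "A *v w = v" unfolding w_def matrix_vector_mul_assoc AA by simp
  have "Re (cinner (matrix_inv A *v v) v) = Re (cinner (A *v w) w)"
  proof -
    have "Re (cinner (matrix_inv A *v v) v) = Re (cinner w (A *v w))" unfolding w_def[symmetric] Aw ..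
    also have "\<dots> = Re (cnj (cinner (A *v w) w))" by (simp only: cinner_cnj)
    finally show ?thesis by simp
  qed
  then show "(norm v)\<^sup>2 \<le> ((1 + (tan \<alpha>)\<^sup>2) * (qnumrad q A / cmod q)) * Re (cinner (matrix_inv A *v v) v)"
    using F5[of w] unfolding Aw a_def t_def by simp
qed



lemma arith_final:
  fixes a b s Q N \<alpha> :: real
  assumes a: "0 < a" and b: "0 < b" and s: "0 \<le> s" "s \<le> 1" and Q: "0 < Q" "Q \<le> 1"
    and al: "0 \<le> \<alpha>" "\<alpha> < pi / 2"
    and N: "N \<le> 1 / ((1 - s) / ((1 + (tan \<alpha>)\<^sup>2) * (a / Q)) + s / ((1 + (tan \<alpha>)\<^sup>2) * (b / Q)))"
  shows "Q\<^sup>2 * N \<le> (1 / cos \<alpha>) ^ 3 * (a * inverse ((1 - s) + s * inverse (b / a)))"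
proof -
  define T where "T = 1 + (tan \<alpha>)\<^sup>2"
  have c: "0 < cos \<alpha>" using al by (intro cos_gt_zero_pi) auto
  have c1: "cos \<alpha> \<le> 1" by simp
  have T: "T = (1 / cos \<alpha>)\<^sup>2" unfolding T_def using tan_sec[of \<alpha>] c by (simp add: inverse_eq_divide)
  have ic: "1 \<le> 1 / cos \<alpha>" using c c1 by simp
  have Tc: "T \<le> (1 / cos \<alpha>) ^ 3" unfolding T
    by (rule power_increasing) (use ic in auto)
  have Tp: "0 < T" unfolding T_def by (simp add: add_pos_nonneg)
  define D where "D = (1 - s) / a + s / b"
  have Dp: "0 < D" unfolding D_def using a b s by (cases "s = 0") (auto intro: add_nonneg_pos add_pos_nonneg)
  have h: "(1 - s) / (T * (a / Q)) + s / (T * (b / Q)) = (Q / T) * D"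
    unfolding D_def using Tp a b Q by (simp add: field_simps)
  have r: "a * inverse ((1 - s) + s * inverse (b / a)) = 1 / D"
  proof -
    have "(1 - s) + s * inverse (b / a) = a * D" unfolding D_def using a b by (simp add: field_simps)
    then show ?thesis using a Dp by (simp add: field_simps)
  qed
  have N': "N \<le> 1 / ((Q / T) * D)" using N unfolding T_def[symmetric] h .
  have "Q\<^sup>2 * N \<le> Q\<^sup>2 * (1 / ((Q / T) * D))" using N' by (intro mult_left_mono) auto
  also have "\<dots> = (Q * T) * (1 / D)" using Q Tp Dp by (simp add: field_simps power2_eq_square)
  also have "\<dots> \<le> (1 / cos \<alpha>) ^ 3 * (1 / D)"
  proof (intro mult_right_mono)
    have "Q * T \<le> 1 * T" using Q Tp by (intro mult_right_mono) auto
    then show "Q * T \<le> (1 / cos \<alpha>) ^ 3" using Tc by simp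
  qed (use Dp in simp)
  finally show ?thesis unfolding r .
qed

lemma wharm_bound:
  fixes A B :: "complex^'n::finite^'n"
  assumes card: "CARD('n) \<ge> 2" and al: "0 \<le> \<alpha>" "\<alpha> < pi / 2"
    and As: "A \<in> sectorial \<alpha>" and Bs: "B \<in> sectorial \<alpha>" and q: "0 < cmod q" "cmod q \<le> 1"
    and s: "0 \<le> s" "s \<le> 1" and x: "norm x = 1" and y: "norm y = 1"
  shows "(cmod q)\<^sup>2 * cmod (cinner (wharm s A B *v x) y)
     \<le> (1 / cos \<alpha>) ^ 3 * (qnumrad q A * inverse ((1 - s) + s * inverse (qnumrad q B / qnumrad q A)))"
proof -
  define a where "a = qnumrad q A"
  define b where "b = qnumrad q B"
  define T where "T = 1 + (tan \<alpha>)\<^sup>2"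
  define KA where "KA = T * (a / cmod q)"
  define KB where "KB = T * (b / cmod q)"
  note DA = sect_data[OF card al As q]
  note DB = sect_data[OF card al Bs q]
  have a: "0 < a" "0 < b" unfolding a_def b_def using DA(1) DB(1) by auto
  have Tp: "0 < T" unfolding T_def by (simp add: add_pos_nonneg)
  have K: "0 < KA" "0 < KB" unfolding KA_def KB_def using Tp a q by auto
  have iA: "(norm v)\<^sup>2 / KA \<le> Re (cinner (matrix_inv A *v v) v)" for v
  proof -
    have "(norm v)\<^sup>2 \<le> KA * Re (cinner (matrix_inv A *v v) v)"
      using DA(3)[of v] unfolding KA_def T_def a_def .
    then show ?thesis by (simp add: pos_divide_le_eq[OF K(1)] mult.commute)
  qed
  have iB: "(norm v)\<^sup>2 / KB \<le> Re (cinner (matrix_inv B *v v) v)" for v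
  proof -
    have "(norm v)\<^sup>2 \<le> KB * Re (cinner (matrix_inv B *v v) v)"
      using DB(3)[of v] unfolding KB_def T_def b_def .
    then show ?thesis by (simp add: pos_divide_le_eq[OF K(2)] mult.commute)
  qed
  define M where "M = (1 - s) *\<^sub>R matrix_inv A + s *\<^sub>R matrix_inv B"
  define h where "h = (1 - s) / KA + s / KB"
  have hp: "0 < h" unfolding h_def using K s by (cases "s = 0") (auto intro: add_nonneg_pos add_pos_nonneg)
  have ReM: "h * (norm v)\<^sup>2 \<le> Re (cinner (M *v v) v)" for v
  proof -
    have "Re (cinner (M *v v) v) = (1 - s) * Re (cinner (matrix_inv A *v v) v) + s * Re (cinner (matrix_inv B *v v) v)"
      unfolding M_def by (simp add: mat_add_mv mat_scaleR_mv cinner_add_left cinner_scaleR_left)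
    moreover have "(1 - s) * ((norm v)\<^sup>2 / KA) \<le> (1 - s) * Re (cinner (matrix_inv A *v v) v)"
      using s iA[of v] by (intro mult_left_mono) auto
    moreover have "s * ((norm v)\<^sup>2 / KB) \<le> s * Re (cinner (matrix_inv B *v v) v)"
      using s iB[of v] by (intro mult_left_mono) auto
    ultimately show ?thesis unfolding h_def by (simp add: algebra_simps)
  qed
  have invM: "invertible M"
  proof (rule invertible_from_ker)
    fix v assume "M *v v = 0"
    then have "h * (norm v)\<^sup>2 \<le> 0" using ReM[of v] by simp
    then show "v = 0" using hp by (simp add: mult_le_0_iff)
  qed
  have MC: "M ** matrix_inv M = mat 1" using invertible_inv[OF invM] by blast
  have W: "wharm s A B = matrix_inv M" unfolding wharm_def M_def ..
  define v where "v = matrix_inv M *v x"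
  have Mv: "M *v v = x" unfolding v_def matrix_vector_mul_assoc MC by simp
  have "h * (norm v)\<^sup>2 \<le> Re (cinner x v)" using ReM[of v] unfolding Mv .
  also have "\<dots> \<le> cmod (cinner x v)" by (rule complex_Re_le_cmod)
  also have "\<dots> \<le> norm v" using cinner_CS[of x v] x by simp
  finally have hv: "h * (norm v)\<^sup>2 \<le> norm v" .
  have nv: "norm v \<le> 1 / h"
  proof (cases "norm v = 0")
    case True then show ?thesis using hp by simp
  next
    case False
    then have "0 < norm v" by simp
    moreover have "(h * norm v) * norm v \<le> 1 * norm v" using hv by (simp add: power2_eq_square mult_ac)
    ultimately have "h * norm v \<le> 1" using mult_right_le_imp_le by blast
    then show ?thesis using hp by (simp add: field_simps)
  qed
  have "cmod (cinner (wharm s A B *v x) y) \<le> norm v"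
    unfolding W v_def[symmetric] using cinner_CS[of v y] y by simp
  also have "\<dots> \<le> 1 / h" by (rule nv)
  finally have N: "cmod (cinner (wharm s A B *v x) y) \<le> 1 / ((1 - s) / ((1 + (tan \<alpha>)\<^sup>2) * (a / cmod q)) + s / ((1 + (tan \<alpha>)\<^sup>2) * (b / cmod q)))"
    unfolding h_def KA_def KB_def T_def .
  show ?thesis unfolding a_def[symmetric] b_def[symmetric]
    by (rule arith_final[OF a s q al N])
qed



theorem mainTheorem10:
  fixes A B :: "complex^'n::finite^'n" and q :: complex and \<alpha> :: real and \<nu> :: "real measure"
  assumes "CARD('n) \<ge> 2"
    and "0 \<le> \<alpha>" and "\<alpha> < pi / 2"
    and "A \<in> sectorial \<alpha>" and "B \<in> sectorial \<alpha>"
    and "0 < cmod q" and "cmod q \<le> 1"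
    and "prob_on_unit \<nu>"
  shows "(cmod q)\<^sup>2 * qnumrad q (opmean \<nu> A B)
           \<le> (1 / cos \<alpha>) ^ 3 * scmean \<nu> (qnumrad q A) (qnumrad q B)"
proof -
  note card = assms(1) and al = assms(2,3) and As = assms(4) and Bs = assms(5) and q = assms(6,7)
  have Pnu: "prob_space \<nu>" and sets_nu: "sets \<nu> = sets borel" and em: "emeasure \<nu> {0..1} = 1"
    using assms(8) unfolding prob_on_unit_def by auto
  interpret P: prob_space \<nu> by (rule Pnu)
  have AE01: "AE s in \<nu>. s \<in> {0..1}"
    by (rule P.AE_prob_1) (simp add: measure_def em)
  define a where "a = qnumrad q A"
  define b where "b = qnumrad q B"
  have a: "0 < a" "0 < b" unfolding a_def b_def
    using sect_data(1)[OF card al As q] sect_data(1)[OF card al Bs q] by auto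
  define c3 where "c3 = (1 / cos \<alpha>) ^ 3"
  have c: "0 < cos \<alpha>" using al by (intro cos_gt_zero_pi) auto
  have c3: "0 < c3" unfolding c3_def using c by simp
  define k where "k = (\<lambda>s::real. inverse ((1 - s) + s * inverse (b / a)))"
  define G where "G = (\<lambda>s. c3 * (a * k s))"
  define d where "d = min 1 (a / b)"
  have dp: "0 < d" unfolding d_def using a by simp
  have kb: "0 < k s \<and> k s \<le> 1 / d" if "s \<in> {0..1}" for s
  proof -
    have s: "0 \<le> s" "s \<le> 1" using that by auto
    have "inverse (b / a) = a / b" by simp
    have "d \<le> (1 - s) + s * (a / b)"
    proof -
      have "(1 - s) * d + s * d \<le> (1 - s) * 1 + s * (a / b)"
        using s unfolding d_def by (intro add_mono mult_left_mono) auto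
      then show ?thesis by (simp add: algebra_simps)
    qed
    then have "0 < (1 - s) + s * (a / b)" "d \<le> (1 - s) + s * (a / b)" using dp by auto
    then show ?thesis unfolding k_def using dp by (simp add: inverse_eq_divide frac_le)
  qed
  have Gnn: "AE s in \<nu>. 0 \<le> G s"
    using AE01 proof eventually_elim
    case (elim s)
    then have "0 < k s" using kb by auto
    then show ?case unfolding G_def using a c3 by simp
  qed
  have Gmeas: "G \<in> borel_measurable \<nu>"
    unfolding measurable_cong_sets[OF sets_nu refl] G_def k_def by measurable
  have Gint: "integrable \<nu> G"
  proof (rule P.integrable_const_bound[OF _ Gmeas])
    show "AE s in \<nu>. norm (G s) \<le> c3 * (a * (1 / d))"
      using AE01 proof eventually_elim
      case (elim s)
      then have "0 < k s" "k s \<le> 1 / d" using kb by auto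
      then have "c3 * (a * k s) \<le> c3 * (a * (1 / d))" using a c3 by (intro mult_left_mono) auto
      moreover have "0 \<le> c3 * (a * k s)" using a c3 \<open>0 < k s\<close> by simp
      ultimately show ?case unfolding G_def by simp
    qed
  qed
  have RHS: "(1 / cos \<alpha>) ^ 3 * scmean \<nu> (qnumrad q A) (qnumrad q B) = integral\<^sup>L \<nu> G"
    unfolding G_def c3_def scmean_def omfun_def a_def[symmetric] b_def[symmetric] k_def by simp
  have pairs: "\<exists>x y::complex^'n. norm x = 1 \<and> norm y = 1 \<and> cinner x y = q"
  proof -
    define x0 :: "complex^'n" where "x0 = axis undefined 1"
    have x0: "norm x0 = 1" unfolding x0_def by (rule norm_axis_c)
    then show ?thesis using qnum_lower(2)[OF card q(2) x0] by blast
  qed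
  have main: "(cmod q)\<^sup>2 * cmod (cinner (opmean \<nu> A B *v x) y) \<le> integral\<^sup>L \<nu> G"
    if x: "norm x = 1" and y: "norm y = 1" for x y :: "complex^'n"
  proof -
    define L where "L = (\<lambda>M::complex^'n^'n. cinner (M *v x) y)"
    have linL: "linear L" unfolding L_def
      by (rule linearI) (simp_all add: mat_add_mv mat_scaleR_mv cinner_add_left cinner_scaleR_left cscaleR)
    then have blL: "bounded_linear L" by (simp add: linear_conv_bounded_linear)
    have pw: "AE s in \<nu>. (cmod q)\<^sup>2 * cmod (L (wharm s A B)) \<le> G s"
      using AE01 proof eventually_elim
      case (elim s)
      then show ?case unfolding L_def G_def k_def c3_def a_def b_def
        using wharm_bound[OF card al As Bs q _ _ x y, of s] by auto
    qed
    show ?thesis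
    proof (cases "integrable \<nu> (\<lambda>s. wharm s A B)")
      case True
      have "L (opmean \<nu> A B) = integral\<^sup>L \<nu> (\<lambda>s. L (wharm s A B))"
        unfolding opmean_def by (rule integral_bounded_linear[OF blL True, symmetric])
      then have "cmod (L (opmean \<nu> A B)) \<le> integral\<^sup>L \<nu> (\<lambda>s. cmod (L (wharm s A B)))"
        using integral_norm_bound by metis
      then have "(cmod q)\<^sup>2 * cmod (L (opmean \<nu> A B)) \<le> (cmod q)\<^sup>2 * integral\<^sup>L \<nu> (\<lambda>s. cmod (L (wharm s A B)))"
        by (intro mult_left_mono) auto
      also have "\<dots> = integral\<^sup>L \<nu> (\<lambda>s. (cmod q)\<^sup>2 * cmod (L (wharm s A B)))" by simp
      also have "\<dots> \<le> integral\<^sup>L \<nu> G"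
        by (rule integral_mono_AE'[OF Gint pw Gnn])
      finally show ?thesis unfolding L_def .
    next
      case False
      then have "opmean \<nu> A B = 0" unfolding opmean_def by (rule not_integrable_integral_eq)
      then show ?thesis using integral_nonneg_AE[OF Gnn] by simp
    qed
  qed
  have "qnumrad q (opmean \<nu> A B) \<le> integral\<^sup>L \<nu> G / (cmod q)\<^sup>2"
  proof (rule qnumrad_le[OF pairs])
    fix x y :: "complex^'n" assume "norm x = 1" "norm y = 1" "cinner x y = q"
    then show "cmod (cinner (opmean \<nu> A B *v x) y) \<le> integral\<^sup>L \<nu> G / (cmod q)\<^sup>2"
      using main[of x y] q by (simp add: pos_le_divide_eq mult.commute)
  qed
  then have "(cmod q)\<^sup>2 * qnumrad q (opmean \<nu> A B) \<le> integral\<^sup>L \<nu> G"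
    using q by (simp add: pos_le_divide_eq mult.commute)
  then show ?thesis unfolding RHS .
qed

end
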